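(* Let $G=(V,E)$ be a finite graph and suppose $r\in R(V)$ is an isoperimetric order on $V$ for $G$ which has initial-segment closure. Then \[ b(G) = \min_{r' \in R(V)} \max_{0 \le k \le |V|} |B_G(r'_k)|. \]
   Context: An order of $V$ is a bijection $r:V\to\{0,\ldots,|V|-1\}$; $R(V)$ denotes the set of all orders. For an order $r$ and $0\le k\le |V|$, the $k$-th initial segment is $r_k = r^{-1}(\{0,\ldots,k-1\})$. The graph bandwidth is $b(G)=\min_{r\in R(V)}\max_{\{v,w\}\in E}|r(v)-r(w)|$. For $W\subseteq V$, the vertex boundary $B_G(W)$ is the set of vertices in $V\setminus W$ adjacent to some vertex of $W$, and the vertex boundary closure is $C_G(W)=W\cup B_G(W)$. An order $r$ is an isoperimetric order on $V$ for $G$ if for every order $r'$ of $V$ and every $0\le k\le |V|$, $|B_G(r_k)|\le |B_G(r'_k)|$. An order $r$ has initial-segment closure if for every $k$, $C_G(r_k)$ is itself an initial segment of $r$ (i.e. equals $r_{k'}$ for some $k'$). *)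

theory Defs
  imports Main
begin

definition fin_graph :: "'a set \<Rightarrow> 'a set set \<Rightarrow> bool" where
  "fin_graph V E \<longleftrightarrow> finite V \<and>
     (\<forall>e\<in>E. \<exists>v w. e = {v, w} \<and> v \<noteq> w \<and> v \<in> V \<and> w \<in> V)"

definition is_order :: "'a set \<Rightarrow> ('a \<Rightarrow> nat) \<Rightarrow> bool" where
  "is_order V r \<longleftrightarrow> bij_betw r V {0..<card V}"

definition init_seg :: "'a set \<Rightarrow> ('a \<Rightarrow> nat) \<Rightarrow> nat \<Rightarrow> 'a set" where
  "init_seg V r k = {v \<in> V. r v < k}"

definition vboundary :: "'a set \<Rightarrow> 'a set set \<Rightarrow> 'a set \<Rightarrow> 'a set" where
  "vboundary V E W = {v \<in> V - W. \<exists>w\<in>W. {v, w} \<in> E}"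

definition vclosure :: "'a set \<Rightarrow> 'a set set \<Rightarrow> 'a set \<Rightarrow> 'a set" where
  "vclosure V E W = W \<union> vboundary V E W"

text \<open>Bandwidth; the max over an empty edge set is taken to be 0.\<close>
definition bandwidth :: "'a set \<Rightarrow> 'a set set \<Rightarrow> nat" where
  "bandwidth V E = Min ((\<lambda>r. Max (insert 0
       {nat \<bar>int (r v) - int (r w)\<bar> | v w. {v, w} \<in> E})) ` {r. is_order V r})"

definition isoperimetric_order :: "'a set \<Rightarrow> 'a set set \<Rightarrow> ('a \<Rightarrow> nat) \<Rightarrow> bool" where
  "isoperimetric_order V E r \<longleftrightarrow> is_order V r \<and>
     (\<forall>r'. is_order V r' \<longrightarrow> (\<forall>k \<le> card V.
        card (vboundary V E (init_seg V r k)) \<le> card (vboundary V E (init_seg V r' k))))"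

definition initial_segment_closure :: "'a set \<Rightarrow> 'a set set \<Rightarrow> ('a \<Rightarrow> nat) \<Rightarrow> bool" where
  "initial_segment_closure V E r \<longleftrightarrow>
     (\<forall>k \<le> card V. \<exists>k' \<le> card V. vclosure V E (init_seg V r k) = init_seg V r k')"

end

theory Submission
  imports Defs
begin

lemma card_init_seg:
  assumes "is_order V r" "j \<le> card V"
  shows "card (init_seg V r j) = j"
proof -
  have b: "bij_betw r V {0..<card V}" using assms(1) by (simp add: is_order_def)
  have "r ` init_seg V r j = {0..<j}"
  proof
    show "r ` init_seg V r j \<subseteq> {0..<j}" by (auto simp: init_seg_def)
    show "{0..<j} \<subseteq> r ` init_seg V r j"
    proof
      fix x assume "x \<in> {0..<j}"
      then have "x \<in> r ` V" using b assms(2) by (auto simp: bij_betw_def)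
      then obtain v where "v \<in> V" "x = r v" by auto
      then show "x \<in> r ` init_seg V r j" using \<open>x \<in> {0..<j}\<close> by (auto simp: init_seg_def)
    qed
  qed
  moreover have "inj_on r (init_seg V r j)" using b
    by (auto simp: bij_betw_def init_seg_def intro: inj_on_subset)
  ultimately show ?thesis by (metis card_atLeastLessThan card_image diff_zero)
qed

theorem lemma3:
  assumes "fin_graph V E"
    and "isoperimetric_order V E r"
    and "initial_segment_closure V E r"
  shows "bandwidth V E =
    Min ((\<lambda>r'. Max ((\<lambda>k. card (vboundary V E (init_seg V r' k))) ` {0..card V}))
           ` {r'. is_order V r'})"
proof -
  have finV: "finite V" using assms(1) by (simp add: fin_graph_def)
  have Esub: "\<And>v w. {v, w} \<in> E \<Longrightarrow> v \<in> V \<and> w \<in> V"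
  proof -
    fix v w assume "{v, w} \<in> E"
    then obtain a b where "{v,w} = {a,b}" "a \<in> V" "b \<in> V"
      using assms(1) unfolding fin_graph_def by blast
    then show "v \<in> V \<and> w \<in> V" by (auto simp: doubleton_eq_iff)
  qed
  have ordr: "is_order V r" using assms(2) by (simp add: isoperimetric_order_def)
  define F where "F = (\<lambda>r'. Max ((\<lambda>k. card (vboundary V E (init_seg V r' k))) ` {0..card V}))"
  define S where "S = (\<lambda>r'::'a \<Rightarrow> nat. {nat \<bar>int (r' v) - int (r' w)\<bar> | v w. {v, w} \<in> E})"
  define Bw where "Bw = (\<lambda>r'. Max (insert 0 (S r')))"
  have bwdef: "bandwidth V E = Min (Bw ` {r'. is_order V r'})"
    unfolding bandwidth_def Bw_def S_def by simp
  have Sbound: "\<And>r'. is_order V r' \<Longrightarrow> S r' \<subseteq> {0..card V}"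
  proof
    fix r' x assume o: "is_order V r'" and "x \<in> S r'"
    then obtain v w where "{v,w} \<in> E" "x = nat \<bar>int (r' v) - int (r' w)\<bar>" by (auto simp: S_def)
    moreover have "r' v < card V" "r' w < card V" using Esub[OF \<open>{v,w} \<in> E\<close>] o
      by (auto simp: is_order_def bij_betw_def)
    ultimately show "x \<in> {0..card V}" by auto
  qed
  have finS: "\<And>r'. is_order V r' \<Longrightarrow> finite (S r')"
    using Sbound finite_subset by blast
  have vbfin: "\<And>W. finite (vboundary V E W)" using finV by (simp add: vboundary_def)
  have vbcard: "\<And>W. card (vboundary V E W) \<le> card V"
    using finV by (intro card_mono) (auto simp: vboundary_def)
  define m where "m = F r"
  have s1: "m \<le> F r'" if o: "is_order V r'" for r'
  proof -
    have "\<forall>k\<in>{0..card V}. card (vboundary V E (init_seg V r k)) \<le> F r'"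
    proof
      fix k assume k: "k \<in> {0..card V}"
      have "card (vboundary V E (init_seg V r k)) \<le> card (vboundary V E (init_seg V r' k))"
        using assms(2) o k by (auto simp: isoperimetric_order_def)
      also have "\<dots> \<le> F r'" unfolding F_def using k by (intro Max_ge) auto
      finally show "card (vboundary V E (init_seg V r k)) \<le> F r'" .
    qed
    then show ?thesis unfolding m_def F_def by (subst Max_le_iff) auto
  qed
  have s2: "F r' \<le> Bw r'" if o: "is_order V r'" for r'
  proof -
    have inj: "inj_on r' V" using o by (simp add: is_order_def bij_betw_def)
    have "\<forall>k\<in>{0..card V}. card (vboundary V E (init_seg V r' k)) \<le> Bw r'"
    proof
      fix k assume k: "k \<in> {0..card V}"
      have sub: "vboundary V E (init_seg V r' k) \<subseteq> {v \<in> V. r' v \<in> {k..<k + Bw r'}}"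
      proof
        fix v assume "v \<in> vboundary V E (init_seg V r' k)"
        then obtain w where v: "v \<in> V" "\<not> r' v < k" and w: "r' w < k" "{v,w} \<in> E"
          by (auto simp: vboundary_def init_seg_def)
        have "nat \<bar>int (r' v) - int (r' w)\<bar> \<in> S r'" using w unfolding S_def by blast
        then have "nat \<bar>int (r' v) - int (r' w)\<bar> \<le> Bw r'" unfolding Bw_def
          using finS[OF o] by (intro Max_ge) auto
        then show "v \<in> {v \<in> V. r' v \<in> {k..<k + Bw r'}}" using v w by auto
      qed
      have "card {v \<in> V. r' v \<in> {k..<k + Bw r'}} \<le> card {k..<k + Bw r'}"
        by (rule card_inj_on_le) (auto intro: inj_on_subset[OF inj])
      then have "card (vboundary V E (init_seg V r' k)) \<le> card {k..<k + Bw r'}"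
        using card_mono[OF _ sub] finV by (metis (no_types, lifting) finite_subset le_trans mem_Collect_eq subsetI)
      then show "card (vboundary V E (init_seg V r' k)) \<le> Bw r'" by simp
    qed
    then show ?thesis unfolding F_def by (subst Max_le_iff) auto
  qed
  have s3: "Bw r \<le> m"
  proof -
    have key: "r w - r v \<le> m" if e: "{v,w} \<in> E" and lt: "r v < r w" for v w
    proof -
      have vw: "v \<in> V" "w \<in> V" using Esub[OF e] by auto
      have rw: "r w < card V" using vw ordr by (auto simp: is_order_def bij_betw_def)
      define k where "k = Suc (r v)"
      have kle: "k \<le> card V" using lt rw k_def by simp
      obtain k' where k': "k' \<le> card V" "vclosure V E (init_seg V r k) = init_seg V r k'"
        using assms(3) kle by (auto simp: initial_segment_closure_def)
      have "w \<in> vboundary V E (init_seg V r k)"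
        unfolding vboundary_def init_seg_def using vw e lt k_def
        by (auto simp: insert_commute)
      then have "w \<in> init_seg V r k'" using k'(2) by (auto simp: vclosure_def)
      then have "r w < k'" by (simp add: init_seg_def)
      have "card (vclosure V E (init_seg V r k)) = k + card (vboundary V E (init_seg V r k))"
      proof -
        have "card (init_seg V r k \<union> vboundary V E (init_seg V r k)) =
          card (init_seg V r k) + card (vboundary V E (init_seg V r k))"
          by (rule card_Un_disjoint) (auto simp: vbfin vboundary_def init_seg_def intro: finite_subset[OF _ finV])
        then show ?thesis unfolding vclosure_def using card_init_seg[OF ordr kle] by simp
      qed
      then have "k' = k + card (vboundary V E (init_seg V r k))"
        using k' card_init_seg[OF ordr] by simp
      moreover have "card (vboundary V E (init_seg V r k)) \<le> m"
        unfolding m_def F_def using kle by (intro Max_ge) auto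
      ultimately show ?thesis using \<open>r w < k'\<close> k_def by simp
    qed
    have "\<forall>x\<in>S r. x \<le> m"
    proof
      fix x assume "x \<in> S r"
      then obtain v w where e: "{v,w} \<in> E" and x: "x = nat \<bar>int (r v) - int (r w)\<bar>"
        by (auto simp: S_def)
      have e': "{w,v} \<in> E" using e by (simp add: insert_commute)
      consider "r v < r w" | "r w < r v" | "r v = r w" by linarith
      then show "x \<le> m"
      proof cases
        case 1 then show ?thesis using key[OF e 1] x by simp
      next
        case 2 then show ?thesis using key[OF e' 2] x by simp
      qed (simp add: x)
    qed
    then show ?thesis unfolding Bw_def using finS[OF ordr] by (subst Max_le_iff) auto
  qed
  have Fbound: "F ` {r'. is_order V r'} \<subseteq> {0..card V}"
  proof
    fix x assume "x \<in> F ` {r'. is_order V r'}"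
    then obtain r' where "x = F r'" by auto
    have "F r' \<in> (\<lambda>k. card (vboundary V E (init_seg V r' k))) ` {0..card V}"
      unfolding F_def by (intro Max_in) auto
    then show "x \<in> {0..card V}" using vbcard \<open>x = F r'\<close> by auto
  qed
  have Bbound: "Bw ` {r'. is_order V r'} \<subseteq> {0..card V}"
  proof
    fix x assume "x \<in> Bw ` {r'. is_order V r'}"
    then obtain r' where o: "is_order V r'" and "x = Bw r'" by auto
    have "Bw r' \<in> insert 0 (S r')" unfolding Bw_def using finS[OF o] by (intro Max_in) auto
    then show "x \<in> {0..card V}" using Sbound[OF o] \<open>x = Bw r'\<close> by auto
  qed
  have "Min (F ` {r'. is_order V r'}) = m"
    using finite_subset[OF Fbound] ordr s1 m_def
    by (intro Min_eqI) auto
  moreover have "Bw r = m" using s2[OF ordr] s3 m_def by simp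
  moreover have "Min (Bw ` {r'. is_order V r'}) = m"
    using \<open>Bw r = m\<close> finite_subset[OF Bbound] ordr s1 s2 s3 m_def
    by (intro Min_eqI) (auto intro: le_trans, metis image_eqI mem_Collect_eq)
  ultimately show ?thesis using bwdef F_def by simp
qed

end
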